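(* Let $V$ be a complex vector space with basis $\{v_i:i\in\mathbb{Z}\}$ and let $\mathbf{a}\in\mathbb{C}^{\mathbb{Z}}$ be not generic. Then $\mathbf{a}^\perp$ is a subspace of $V$ of finite codimension $m$, where $m$ is the minimal non-negative integer for which there exists a non-zero $v\in\mathbf{a}^\perp$ with $\omega(v)=m$. Moreover, for such a $v$ (with $\omega(v)=m$), the collection of all $\mathbb{Z}$-translates of $v$ is a basis of $\mathbf{a}^\perp$, and this basis extended by $v_0,v_1,\dots,v_{m-1}$ (an empty list if $m=0$) is a basis of $V$.
   Context: $\mathbb{C}^{\mathbb{Z}}$ is identified with the dual $V^*$: $\mathbf{a}=(a_i)$ corresponds to the functional $v_i\mapsto a_i$; write $\langle\mathbf{a},v\rangle$ for the evaluation. $\mathbb{Z}$ acts on $V$ by $n\cdot v_i=v_{i+n}$ and on $\mathbb{C}^{\mathbb{Z}}$ by $n\cdot(a_i)_i=(a_{i+n})_i$; write $x^{(n)}=n\cdot x$ ($\mathbb{Z}$-translates). An element $\mathbf{a}$ is generic if the multiset of all its $\mathbb{Z}$-translates is linearly independent. $\mathbf{a}^\perp=\{v\in V:\langle\mathbf{a},v^{(i)}\rangle=0\text{ for all }i\in\mathbb{Z}\}$. For non-zero $v=\sum_i c_iv_i\in V$, $l(v)=\min\{i:c_i\neq0\}$, $r(v)=\max\{i:c_i\neq0\}$ and $\omega(v)=r(v)-l(v)$. *)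

theory Defs
  imports Complex_Main
begin

text \<open>The space V with basis v_i (i in Z) is modelled as the finitely supported
functions int => complex (coefficient vectors); C^Z is int => complex.\<close>

definition Vsp :: "(int \<Rightarrow> complex) set" where
  "Vsp = {c. finite {i. c i \<noteq> 0}}"

definition basisv :: "int \<Rightarrow> int \<Rightarrow> complex" where
  "basisv k = (\<lambda>j. if j = k then 1 else 0)"

definition pair :: "(int \<Rightarrow> complex) \<Rightarrow> (int \<Rightarrow> complex) \<Rightarrow> complex" where
  "pair a v = (\<Sum>i\<in>{i. v i \<noteq> 0}. a i * v i)"

text \<open>n . v_i = v_(i+n), extended linearly\<close>
definition shiftV :: "int \<Rightarrow> (int \<Rightarrow> complex) \<Rightarrow> (int \<Rightarrow> complex)" where
  "shiftV n v = (\<lambda>j. v (j - n))"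

definition shiftA :: "int \<Rightarrow> (int \<Rightarrow> complex) \<Rightarrow> (int \<Rightarrow> complex)" where
  "shiftA n a = (\<lambda>i. a (i + n))"

text \<open>linear independence of an indexed family (so repeated members count as dependent)\<close>
definition fam_indep :: "'i set \<Rightarrow> ('i \<Rightarrow> int \<Rightarrow> complex) \<Rightarrow> bool" where
  "fam_indep I f \<longleftrightarrow> (\<forall>S c. finite S \<and> S \<subseteq> I \<and> (\<lambda>j. \<Sum>s\<in>S. c s * f s j) = (\<lambda>j. 0)
      \<longrightarrow> (\<forall>s\<in>S. c s = 0))"

definition fam_span :: "'i set \<Rightarrow> ('i \<Rightarrow> int \<Rightarrow> complex) \<Rightarrow> (int \<Rightarrow> complex) set" where
  "fam_span I f = {w. \<exists>S c. finite S \<and> S \<subseteq> I \<and> w = (\<lambda>j. \<Sum>s\<in>S. c s * f s j)}"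

definition is_basis_of :: "'i set \<Rightarrow> ('i \<Rightarrow> int \<Rightarrow> complex) \<Rightarrow> (int \<Rightarrow> complex) set \<Rightarrow> bool" where
  "is_basis_of I f W \<longleftrightarrow> (\<forall>i\<in>I. f i \<in> W) \<and> fam_indep I f \<and> fam_span I f = W"

definition generic :: "(int \<Rightarrow> complex) \<Rightarrow> bool" where
  "generic a \<longleftrightarrow> fam_indep (UNIV :: int set) (\<lambda>n. shiftA n a)"

definition perp :: "(int \<Rightarrow> complex) \<Rightarrow> (int \<Rightarrow> complex) set" where
  "perp a = {v \<in> Vsp. \<forall>i. pair a (shiftV i v) = 0}"

definition lidx :: "(int \<Rightarrow> complex) \<Rightarrow> int" where
  "lidx v = Min {i. v i \<noteq> 0}"

definition ridx :: "(int \<Rightarrow> complex) \<Rightarrow> int" where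
  "ridx v = Max {i. v i \<noteq> 0}"

definition width :: "(int \<Rightarrow> complex) \<Rightarrow> int" where
  "width v = ridx v - lidx v"

end

theory Submission
  imports Defs
begin


lemma pair_shift:
  assumes "finite F" "{k. w k \<noteq> 0} \<subseteq> F"
  shows "pair a (shiftV i w) = (\<Sum>k\<in>F. a (k+i) * w k)"
proof -
  have e: "{k. shiftV i w k \<noteq> 0} = (\<lambda>k. k+i) ` {k. w k \<noteq> 0}"
    unfolding shiftV_def by (auto simp: image_iff) (metis diff_add_cancel)
  have "pair a (shiftV i w) = (\<Sum>k\<in>{k. w k\<noteq>0}. a (k+i) * w k)"
    unfolding pair_def e by (subst sum.reindex) (auto simp: inj_on_def shiftV_def)
  also have "\<dots> = (\<Sum>k\<in>F. a (k+i) * w k)"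
    by (rule sum.mono_neutral_left) (use assms in auto)
  finally show ?thesis .
qed

lemma perp_lin:
  assumes "w1 \<in> perp a" "w2 \<in> perp a"
  shows "(\<lambda>j. c1 * w1 j + c2 * w2 j) \<in> perp a"
proof -
  let ?F = "{k. w1 k \<noteq> 0} \<union> {k. w2 k \<noteq> 0}"
  have fin: "finite ?F" using assms by (auto simp: perp_def Vsp_def)
  have sub: "{k. c1 * w1 k + c2 * w2 k \<noteq> 0} \<subseteq> ?F" by auto
  have "pair a (shiftV i (\<lambda>j. c1 * w1 j + c2 * w2 j)) = 0" for i
  proof -
    have "pair a (shiftV i (\<lambda>j. c1 * w1 j + c2 * w2 j)) = (\<Sum>k\<in>?F. a (k+i) * (c1 * w1 k + c2 * w2 k))"
      using pair_shift[OF fin sub] by simp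
    also have "\<dots> = c1 * (\<Sum>k\<in>?F. a (k+i) * w1 k) + c2 * (\<Sum>k\<in>?F. a (k+i) * w2 k)"
      by (simp add: sum_distrib_left sum.distrib algebra_simps)
    also have "\<dots> = c1 * pair a (shiftV i w1) + c2 * pair a (shiftV i w2)"
      using pair_shift[OF fin, of w1] pair_shift[OF fin, of w2] by auto
    also have "\<dots> = 0" using assms by (simp add: perp_def)
    finally show ?thesis .
  qed
  moreover have "(\<lambda>j. c1 * w1 j + c2 * w2 j) \<in> Vsp"
    using finite_subset[OF sub fin] by (simp add: Vsp_def)
  ultimately show ?thesis by (simp add: perp_def)
qed

lemma perp_zero: "(\<lambda>j. 0) \<in> perp a"
  by (simp add: perp_def Vsp_def pair_def shiftV_def)

lemma perp_shift:
  assumes "w \<in> perp a" shows "shiftV s w \<in> perp a"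
proof -
  have e: "{k. shiftV s w k \<noteq> 0} = (\<lambda>k. k+s) ` {k. w k \<noteq> 0}"
    unfolding shiftV_def by (auto simp: image_iff) (metis diff_add_cancel)
  have "shiftV i (shiftV s w) = shiftV (i+s) w" for i
    by (auto simp: shiftV_def algebra_simps)
  moreover have "finite {k. shiftV s w k \<noteq> 0}" unfolding e using assms by (simp add: perp_def Vsp_def)
  ultimately show ?thesis using assms unfolding perp_def Vsp_def by auto
qed

lemma perp_sum:
  assumes "finite S" "\<forall>s\<in>S. f s \<in> perp a"
  shows "(\<lambda>j. \<Sum>s\<in>S. c s * f s j) \<in> perp a"
  using assms
proof (induction S rule: finite_induct)
  case empty
  then show ?case using perp_zero by simp
next
  case (insert x S)
  have "(\<lambda>j. \<Sum>s\<in>insert x S. c s * f s j) = (\<lambda>j. c x * f x j + 1 * (\<Sum>s\<in>S. c s * f s j))"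
    using insert by simp
  then show ?case using perp_lin[of "f x" a "\<lambda>j. \<Sum>s\<in>S. c s * f s j" "c x" 1] insert by simp
qed

lemma Vsp_perp0: "perp (\<lambda>_. 0) = Vsp"
  by (simp add: perp_def pair_def)


lemma width_small:
  assumes "w \<in> Vsp" "w \<noteq> (\<lambda>j. 0)" "\<forall>j. w j \<noteq> 0 \<longrightarrow> 0 \<le> j \<and> j < int m"
  shows "width w < int m"
proof -
  have fin: "finite {j. w j \<noteq> 0}" using assms(1) by (simp add: Vsp_def)
  have ne: "{j. w j \<noteq> 0} \<noteq> {}" using assms(2) by auto
  have "ridx w \<in> {j. w j \<noteq> 0}" "lidx w \<in> {j. w j \<noteq> 0}"
    unfolding ridx_def lidx_def using Max_in[OF fin ne] Min_in[OF fin ne] by auto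
  then have "ridx w < int m" "0 \<le> lidx w" using assms(3) by auto
  then show ?thesis unfolding width_def by simp
qed

lemma width_nonneg:
  assumes "w \<in> Vsp" "w \<noteq> (\<lambda>j. 0)"
  shows "0 \<le> width w"
proof -
  have fin: "finite {j. w j \<noteq> 0}" using assms(1) by (simp add: Vsp_def)
  have ne: "{j. w j \<noteq> 0} \<noteq> {}" using assms(2) by auto
  obtain x where "x \<in> {j. w j \<noteq> 0}" using ne by blast
  then show ?thesis unfolding width_def ridx_def lidx_def
    using Min_le[OF fin, of x] Max_ge[OF fin, of x] by simp
qed

locale wv =
  fixes v :: "int \<Rightarrow> complex" and m :: nat
  assumes vV: "v \<in> Vsp" and vnz: "v \<noteq> (\<lambda>j. 0)" and vw: "width v = int m"
begin

lemma ends: "v (lidx v) \<noteq> 0" "v (ridx v) \<noteq> 0" "v j \<noteq> 0 \<Longrightarrow> lidx v \<le> j \<and> j \<le> ridx v"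
  "ridx v = lidx v + int m"
proof -
  have fin: "finite {j. v j \<noteq> 0}" using vV by (simp add: Vsp_def)
  have ne: "{j. v j \<noteq> 0} \<noteq> {}" using vnz by auto
  show "v (lidx v) \<noteq> 0" "v (ridx v) \<noteq> 0"
    unfolding ridx_def lidx_def using Max_in[OF fin ne] Min_in[OF fin ne] by auto
  show "v j \<noteq> 0 \<Longrightarrow> lidx v \<le> j \<and> j \<le> ridx v"
    unfolding ridx_def lidx_def using fin by auto
  show "ridx v = lidx v + int m" using vw by (simp add: width_def)
qed

lemma vzero: "j < lidx v \<or> j > ridx v \<Longrightarrow> v j = 0"
  using ends(3)[of j] by force

definition cmb :: "(int \<Rightarrow> complex) \<Rightarrow> int \<Rightarrow> complex" where
  "cmb d j = (\<Sum>s\<in>{s. d s \<noteq> 0}. d s * v (j - s))"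

lemma cmb_eq:
  assumes "finite F" "{s. d s \<noteq> 0} \<subseteq> F"
  shows "cmb d j = (\<Sum>s\<in>F. d s * v (j - s))"
  unfolding cmb_def by (rule sum.mono_neutral_left) (use assms in auto)

lemma cmb_add:
  assumes "finite {s. d1 s \<noteq> 0}" "finite {s. d2 s \<noteq> 0}"
  shows "cmb (\<lambda>s. d1 s + d2 s) j = cmb d1 j + cmb d2 j"
proof -
  let ?F = "{s. d1 s \<noteq> 0} \<union> {s. d2 s \<noteq> 0}"
  have f: "finite ?F" using assms by auto
  have "cmb (\<lambda>s. d1 s + d2 s) j = (\<Sum>s\<in>?F. (d1 s + d2 s) * v (j - s))"
    by (rule cmb_eq[OF f]) auto
  also have "\<dots> = (\<Sum>s\<in>?F. d1 s * v (j - s)) + (\<Sum>s\<in>?F. d2 s * v (j - s))"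
    by (simp add: sum.distrib algebra_simps)
  also have "\<dots> = cmb d1 j + cmb d2 j"
    using cmb_eq[OF f, of d1 j] cmb_eq[OF f, of d2 j] by auto
  finally show ?thesis .
qed

lemma cmb_single: "cmb (\<lambda>s. if s = s0 then c else 0) j = c * v (j - s0)"
  by (subst cmb_eq[of "{s0}"]) auto

lemma cmb_zero: "cmb (\<lambda>s. 0) j = 0"
  by (simp add: cmb_def)

lemma cmb_shift: "cmb d = (\<lambda>j. \<Sum>s\<in>{s. d s \<noteq> 0}. d s * shiftV s v j)"
  by (auto simp: cmb_def shiftV_def)

lemma cmb_Vsp:
  assumes "finite {s. d s \<noteq> 0}"
  shows "cmb d \<in> Vsp"
proof -
  have "cmb d \<in> perp (\<lambda>_. 0)" unfolding cmb_shift
    by (rule perp_sum) (use assms perp_shift vV Vsp_perp0 in auto)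
  then show ?thesis using Vsp_perp0 by simp
qed

lemma cmb_perp:
  assumes "finite {s. d s \<noteq> 0}" "v \<in> perp a"
  shows "cmb d \<in> perp a"
  unfolding cmb_shift
  by (rule perp_sum) (use assms perp_shift in auto)


lemma top:
  "\<forall>w. finite {j. w j \<noteq> 0} \<and> (\<forall>j \<ge> int m + int n. w j = 0) \<longrightarrow>
     (\<exists>d. finite {s. d s \<noteq> 0} \<and> (\<forall>j \<ge> int m. w j = cmb d j))"
proof (induction n)
  case 0
  show ?case
  proof (intro allI impI)
    fix w :: "int \<Rightarrow> complex"
    assume "finite {j. w j \<noteq> 0} \<and> (\<forall>j \<ge> int m + int 0. w j = 0)"
    then show "\<exists>d. finite {s. d s \<noteq> 0} \<and> (\<forall>j \<ge> int m. w j = cmb d j)"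
      by (intro exI[of _ "\<lambda>s. 0"]) (auto simp: cmb_zero)
  qed
next
  case (Suc n)
  show ?case
  proof (intro allI impI)
    fix w :: "int \<Rightarrow> complex"
    assume H: "finite {j. w j \<noteq> 0} \<and> (\<forall>j \<ge> int m + int (Suc n). w j = 0)"
    define B where "B = int m + int n"
    define q where "q = w B / v (ridx v)"
    define s0 where "s0 = B - ridx v"
    define w1 where "w1 = (\<lambda>j. w j - q * v (j - s0))"
    have vfin: "finite {j. v j \<noteq> 0}" using vV by (simp add: Vsp_def)
    have "{j. w1 j \<noteq> 0} \<subseteq> {j. w j \<noteq> 0} \<union> (\<lambda>k. k + s0) ` {j. v j \<noteq> 0}"
      unfolding w1_def by (auto simp: image_iff) (metis diff_add_cancel)
    then have f1: "finite {j. w1 j \<noteq> 0}" using H vfin by (meson finite_UnI finite_imageI finite_subset)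
    have z1: "w1 j = 0" if "j \<ge> int m + int n" for j
    proof (cases "j = B")
      case True
      then show ?thesis using ends(2) by (simp add: w1_def q_def s0_def)
    next
      case False
      then have "j \<ge> int m + int (Suc n)" "j - s0 > ridx v" using that by (auto simp: B_def s0_def)
      then show ?thesis using H vzero by (simp add: w1_def)
    qed
    obtain d1 where d1: "finite {s. d1 s \<noteq> 0}" "\<forall>j \<ge> int m. w1 j = cmb d1 j"
      using Suc.IH f1 z1 by blast
    define d where "d = (\<lambda>s. d1 s + (if s = s0 then q else 0))"
    have fd: "finite {s. d s \<noteq> 0}"
      by (rule finite_subset[of _ "insert s0 {s. d1 s \<noteq> 0}"]) (use d1 in \<open>auto simp: d_def\<close>)
    have "cmb d j = cmb d1 j + q * v (j - s0)" for j
      unfolding d_def using cmb_add[OF d1(1), of "\<lambda>s. if s = s0 then q else 0"] cmb_single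
      by (simp add: finite_subset[of _ "{s0}"])
    then have "\<forall>j \<ge> int m. w j = cmb d j" using d1(2) by (simp add: w1_def diff_eq_eq)
    then show "\<exists>d. finite {s. d s \<noteq> 0} \<and> (\<forall>j \<ge> int m. w j = cmb d j)" using fd by blast
  qed
qed

lemma bottom:
  "\<forall>w. finite {j. w j \<noteq> 0} \<and> (\<forall>j \<ge> int m. w j = 0) \<and> (\<forall>j < - int n. w j = 0) \<longrightarrow>
     (\<exists>d. finite {s. d s \<noteq> 0} \<and> (\<forall>j. j < 0 \<or> j \<ge> int m \<longrightarrow> w j = cmb d j))"
proof (induction n)
  case 0
  show ?case
  proof (intro allI impI)
    fix w :: "int \<Rightarrow> complex"
    assume "finite {j. w j \<noteq> 0} \<and> (\<forall>j \<ge> int m. w j = 0) \<and> (\<forall>j < - int 0. w j = 0)"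
    then show "\<exists>d. finite {s. d s \<noteq> 0} \<and> (\<forall>j. j < 0 \<or> j \<ge> int m \<longrightarrow> w j = cmb d j)"
      by (intro exI[of _ "\<lambda>s. 0"]) (auto simp: cmb_zero)
  qed
next
  case (Suc n)
  show ?case
  proof (intro allI impI)
    fix w :: "int \<Rightarrow> complex"
    assume H: "finite {j. w j \<noteq> 0} \<and> (\<forall>j \<ge> int m. w j = 0) \<and> (\<forall>j < - int (Suc n). w j = 0)"
    define A where "A = - int n - 1"
    define q where "q = w A / v (lidx v)"
    define s0 where "s0 = A - lidx v"
    define w1 where "w1 = (\<lambda>j. w j - q * v (j - s0))"
    have vfin: "finite {j. v j \<noteq> 0}" using vV by (simp add: Vsp_def)
    have "{j. w1 j \<noteq> 0} \<subseteq> {j. w j \<noteq> 0} \<union> (\<lambda>k. k + s0) ` {j. v j \<noteq> 0}"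
      unfolding w1_def by (auto simp: image_iff) (metis diff_add_cancel)
    then have f1: "finite {j. w1 j \<noteq> 0}" using H vfin by (meson finite_UnI finite_imageI finite_subset)
    have z1: "w1 j = 0" if "j < - int n" for j
    proof (cases "j = A")
      case True
      then show ?thesis using ends(1) by (simp add: w1_def q_def s0_def)
    next
      case False
      then have "j < - int (Suc n)" "j - s0 < lidx v" using that by (auto simp: A_def s0_def)
      then show ?thesis using H vzero by (simp add: w1_def)
    qed
    have z2: "w1 j = 0" if "j \<ge> int m" for j
    proof -
      have "j - s0 > ridx v" using that ends(4) by (simp add: A_def s0_def)
      then show ?thesis using H vzero that by (simp add: w1_def)
    qed
    obtain d1 where d1: "finite {s. d1 s \<noteq> 0}" "\<forall>j. j < 0 \<or> j \<ge> int m \<longrightarrow> w1 j = cmb d1 j"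
      using Suc.IH f1 z1 z2 by blast
    define d where "d = (\<lambda>s. d1 s + (if s = s0 then q else 0))"
    have fd: "finite {s. d s \<noteq> 0}"
      by (rule finite_subset[of _ "insert s0 {s. d1 s \<noteq> 0}"]) (use d1 in \<open>auto simp: d_def\<close>)
    have "cmb d j = cmb d1 j + q * v (j - s0)" for j
      unfolding d_def using cmb_add[OF d1(1), of "\<lambda>s. if s = s0 then q else 0"] cmb_single
      by (simp add: finite_subset[of _ "{s0}"])
    then have "\<forall>j. j < 0 \<or> j \<ge> int m \<longrightarrow> w j = cmb d j" using d1(2) by (simp add: w1_def diff_eq_eq)
    then show "\<exists>d. finite {s. d s \<noteq> 0} \<and> (\<forall>j. j < 0 \<or> j \<ge> int m \<longrightarrow> w j = cmb d j)"
      using fd by blast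
  qed
qed

lemma reduction:
  assumes "w \<in> Vsp"
  shows "\<exists>d. finite {s. d s \<noteq> 0} \<and> (\<forall>j. j < 0 \<or> j \<ge> int m \<longrightarrow> w j = cmb d j)"
proof -
  have fw: "finite {j. w j \<noteq> 0}" using assms by (simp add: Vsp_def)
  define N where "N = Max (insert 0 {j. w j \<noteq> 0}) + 1"
  have "w j = 0" if "j \<ge> int m + int (nat N)" for j
  proof (rule ccontr)
    assume "w j \<noteq> 0"
    then have "j \<le> Max (insert 0 {j. w j \<noteq> 0})" using fw by simp
    then show False using that unfolding N_def by linarith
  qed
  then obtain d1 where d1: "finite {s. d1 s \<noteq> 0}" "\<forall>j \<ge> int m. w j = cmb d1 j"
    using top fw by blast
  define w' where "w' = (\<lambda>j. w j - cmb d1 j)"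
  have "cmb d1 \<in> Vsp" using cmb_Vsp d1(1) by blast
  then have fw': "finite {j. w' j \<noteq> 0}"
    by (rule_tac finite_subset[of _ "{j. w j \<noteq> 0} \<union> {j. cmb d1 j \<noteq> 0}"])
      (auto simp: w'_def Vsp_def fw)
  define M where "M = Min (insert 0 {j. w' j \<noteq> 0})"
  have "w' j = 0" if "j < - int (nat (- M))" for j
  proof (rule ccontr)
    assume "w' j \<noteq> 0"
    then have "M \<le> j" using fw' unfolding M_def by simp
    then show False using that by linarith
  qed
  moreover have "\<forall>j \<ge> int m. w' j = 0" using d1(2) by (simp add: w'_def)
  ultimately obtain d2 where d2: "finite {s. d2 s \<noteq> 0}" "\<forall>j. j < 0 \<or> j \<ge> int m \<longrightarrow> w' j = cmb d2 j"
    using bottom fw' by blast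
  have "\<forall>j. j < 0 \<or> j \<ge> int m \<longrightarrow> w j = cmb (\<lambda>s. d1 s + d2 s) j"
    using d2(2) cmb_add[OF d1(1) d2(1)] by (simp add: w'_def diff_eq_eq add.commute)
  moreover have "finite {s. d1 s + d2 s \<noteq> 0}"
    by (rule finite_subset[of _ "{s. d1 s \<noteq> 0} \<union> {s. d2 s \<noteq> 0}"]) (use d1 d2 in auto)
  ultimately show ?thesis by (intro exI[of _ "\<lambda>s. d1 s + d2 s"]) simp
qed

lemma indep:
  assumes "finite S" "\<forall>j. (\<Sum>s\<in>S. c s * v (j - s)) = 0"
  shows "\<forall>s\<in>S. c s = 0"
proof (rule ccontr)
  assume "\<not> (\<forall>s\<in>S. c s = 0)"
  then have ne: "{s\<in>S. c s \<noteq> 0} \<noteq> {}" by auto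
  have fin: "finite {s\<in>S. c s \<noteq> 0}" using assms by auto
  define M where "M = Max {s\<in>S. c s \<noteq> 0}"
  have M: "M \<in> S" "c M \<noteq> 0" using Max_in[OF fin ne] unfolding M_def by auto
  have "(\<Sum>s\<in>S. c s * v (M + ridx v - s)) = c M * v (M + ridx v - M) + (\<Sum>s\<in>S - {M}. c s * v (M + ridx v - s))"
    using sum.remove[OF assms(1) M(1)] by blast
  also have "(\<Sum>s\<in>S - {M}. c s * v (M + ridx v - s)) = 0"
  proof (rule sum.neutral, rule ballI)
    fix s assume s: "s \<in> S - {M}"
    show "c s * v (M + ridx v - s) = 0"
    proof (cases "c s = 0")
      case False
      then have "s \<le> M" using s fin unfolding M_def by auto
      then have "s < M" using s by auto
      then show ?thesis using vzero[of "M + ridx v - s"] by simp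
    qed simp
  qed
  finally show False using assms(2) M(2) ends(2) by simp
qed

end



lemma sum_split_sum:
  assumes "finite (S :: ('x + 'y) set)"
  shows "(\<Sum>x\<in>S. g x) = (\<Sum>s\<in>Inl -` S. g (Inl s)) + (\<Sum>k\<in>Inr -` S. g (Inr k))"
proof -
  have e: "S = Inl ` (Inl -` S) \<union> Inr ` (Inr -` S)"
    by (auto simp: image_iff) (metis sumE)
  have f1: "finite (Inl -` S)" "finite (Inr -` S)"
    using assms by (auto intro: finite_vimageI simp: inj_on_def)
  have "(\<Sum>x\<in>S. g x) = (\<Sum>x\<in>Inl ` (Inl -` S). g x) + (\<Sum>x\<in>Inr ` (Inr -` S). g x)"
    unfolding arg_cong[OF e, of "sum g"]
    by (rule sum.union_disjoint[OF finite_imageI[OF f1(1)] finite_imageI[OF f1(2)]]) auto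
  also have "(\<Sum>x\<in>Inl ` (Inl -` S). g x) = (\<Sum>s\<in>Inl -` S. g (Inl s))"
    using sum.reindex[of Inl "Inl -` S" g] by (simp add: inj_on_def comp_def)
  also have "(\<Sum>x\<in>Inr ` (Inr -` S). g x) = (\<Sum>s\<in>Inr -` S. g (Inr s))"
    using sum.reindex[of Inr "Inr -` S" g] by (simp add: inj_on_def comp_def)
  finally show ?thesis .
qed

lemma basisv_Vsp: "basisv k \<in> Vsp"
  unfolding Vsp_def basisv_def by (rule CollectI, rule finite_subset[of _ "{k}"]) auto

lemma sum_basisv:
  "(\<Sum>k\<in>K. e k * basisv (int k) j) = (if j \<ge> 0 \<and> nat j \<in> K then e (nat j) else 0)"
  if "finite K"
proof -
  have "(\<Sum>k\<in>K. e k * basisv (int k) j) = (\<Sum>k\<in>K. if k = nat j \<and> j \<ge> 0 then e k else 0)"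
    by (rule sum.cong) (auto simp: basisv_def)
  also have "\<dots> = (if j \<ge> 0 \<and> nat j \<in> K then e (nat j) else 0)"
    using that by (cases "j \<ge> 0") (auto simp: sum.delta)
  finally show ?thesis .
qed

locale wva = wv +
  fixes a :: "int \<Rightarrow> complex"
  assumes vp: "v \<in> perp a" and mini: "\<forall>w\<in>perp a. w \<noteq> (\<lambda>j. 0) \<longrightarrow> int m \<le> width w"
begin

lemma small_zero:
  assumes "w \<in> perp a" "\<forall>j. w j \<noteq> 0 \<longrightarrow> 0 \<le> j \<and> j < int m"
  shows "w = (\<lambda>j. 0)"
proof (rule ccontr)
  assume "w \<noteq> (\<lambda>j. 0)"
  then have "width w < int m" "int m \<le> width w"
    using width_small[of w m] assms mini by (auto simp: perp_def)
  then show False by simp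
qed

lemma span_perp: "fam_span UNIV (\<lambda>n. shiftV n v) = perp a"
proof
  show "fam_span UNIV (\<lambda>n. shiftV n v) \<subseteq> perp a"
    unfolding fam_span_def using perp_sum[of _ "\<lambda>n. shiftV n v" a] perp_shift[OF vp] by auto
next
  show "perp a \<subseteq> fam_span UNIV (\<lambda>n. shiftV n v)"
  proof
    fix w assume w: "w \<in> perp a"
    then have "w \<in> Vsp" by (simp add: perp_def)
    then obtain d where d: "finite {s. d s \<noteq> 0}" "\<forall>j. j < 0 \<or> j \<ge> int m \<longrightarrow> w j = cmb d j"
      using reduction by blast
    have "(\<lambda>j. 1 * w j + (-1) * cmb d j) \<in> perp a"
      by (rule perp_lin) (use w cmb_perp[OF d(1) vp] in auto)
    moreover have "\<forall>j. 1 * w j + (-1) * cmb d j \<noteq> 0 \<longrightarrow> 0 \<le> j \<and> j < int m"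
    proof (intro allI impI)
      fix j assume "1 * w j + (-1) * cmb d j \<noteq> 0"
      then have "w j \<noteq> cmb d j" by simp
      then show "0 \<le> j \<and> j < int m" using d(2) by (meson not_le)
    qed
    ultimately have "(\<lambda>j. 1 * w j + (-1) * cmb d j) = (\<lambda>j. 0)" by (rule small_zero)
    then have "w = cmb d" by (auto simp: fun_eq_iff)
    then show "w \<in> fam_span UNIV (\<lambda>n. shiftV n v)"
      unfolding fam_span_def cmb_shift using d(1) by blast
  qed
qed

lemma indep_trans: "fam_indep UNIV (\<lambda>n. shiftV n v)"
  unfolding fam_indep_def
proof (intro allI impI)
  fix S c assume H: "finite S \<and> S \<subseteq> UNIV \<and> (\<lambda>j. \<Sum>s\<in>S. c s * shiftV s v j) = (\<lambda>j. 0)"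
  then have "\<forall>j. (\<Sum>s\<in>S. c s * v (j - s)) = 0" by (auto simp: shiftV_def fun_eq_iff)
  then show "\<forall>s\<in>S. c s = 0" using indep H by blast
qed

abbreviation "II \<equiv> (range Inl \<union> Inr ` {..<m} :: (int + nat) set)"
abbreviation "FF \<equiv> (\<lambda>x. case x of Inl n \<Rightarrow> shiftV n v | Inr k \<Rightarrow> basisv (int k))"

lemma ext_indep: "fam_indep II FF"
  unfolding fam_indep_def
proof (intro allI impI)
  fix S c assume H: "finite S \<and> S \<subseteq> II \<and> (\<lambda>j. \<Sum>s\<in>S. c s * FF s j) = (\<lambda>j. 0)"
  define S1 where "S1 = Inl -` S"
  define S2 where "S2 = Inr -` S"
  have f: "finite S1" "finite S2" using H by (auto simp: S1_def S2_def intro: finite_vimageI simp: inj_on_def)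
  have S2m: "S2 \<subseteq> {..<m}" using H by (auto simp: S2_def)
  define u where "u = (\<lambda>j. \<Sum>s\<in>S1. c (Inl s) * shiftV s v j)"
  have eq: "u j + (\<Sum>k\<in>S2. c (Inr k) * basisv (int k) j) = 0" for j
    using sum_split_sum[of S "\<lambda>x. c x * FF x j"] H unfolding u_def S1_def S2_def
    by (auto simp: fun_eq_iff)
  have "u \<in> perp a" unfolding u_def by (rule perp_sum) (use perp_shift[OF vp] f in auto)
  moreover have "\<forall>j. u j \<noteq> 0 \<longrightarrow> 0 \<le> j \<and> j < int m"
  proof (intro allI impI)
    fix j assume "u j \<noteq> 0"
    then have "(\<Sum>k\<in>S2. c (Inr k) * basisv (int k) j) \<noteq> 0" using eq[of j] by auto
    then have "j \<ge> 0 \<and> nat j \<in> S2" using sum_basisv[OF f(2)] by metis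
    then show "0 \<le> j \<and> j < int m" using S2m by auto
  qed
  ultimately have u0: "u = (\<lambda>j. 0)" by (rule small_zero)
  then have "\<forall>j. (\<Sum>s\<in>S1. c (Inl s) * v (j - s)) = 0"
    unfolding u_def by (auto simp: shiftV_def fun_eq_iff)
  then have c1: "\<forall>s\<in>S1. c (Inl s) = 0" using indep[OF f(1), of "\<lambda>s. c (Inl s)"] by blast
  have c2: "c (Inr k) = 0" if "k \<in> S2" for k
    using eq[of "int k"] u0 sum_basisv[OF f(2), of "\<lambda>k. c (Inr k)" "int k"] that by simp
  show "\<forall>s\<in>S. c s = 0"
  proof
    fix x assume "x \<in> S"
    then show "c x = 0" using c1 c2 by (cases x) (auto simp: S1_def S2_def)
  qed
qed

lemma ext_span: "fam_span II FF = Vsp"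
proof
  have mem: "FF x \<in> perp (\<lambda>_. 0)" for x
    using perp_shift[of v "\<lambda>_. 0"] vV basisv_Vsp Vsp_perp0 by (cases x) auto
  show "fam_span II FF \<subseteq> Vsp"
    unfolding fam_span_def using perp_sum[of _ FF "\<lambda>_. 0"] mem Vsp_perp0 by auto
next
  show "Vsp \<subseteq> fam_span II FF"
  proof
    fix w assume w: "w \<in> Vsp"
    then obtain d where d: "finite {s. d s \<noteq> 0}" "\<forall>j. j < 0 \<or> j \<ge> int m \<longrightarrow> w j = cmb d j"
      using reduction by auto
    define e where "e = (\<lambda>k::nat. w (int k) - cmb d (int k))"
    define S where "S = Inl ` {s. d s \<noteq> 0} \<union> Inr ` {..<m}"
    define c where "c = case_sum d e"
    have fS: "finite S" using d(1) by (simp add: S_def)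
    have v1: "Inl -` S = {s. d s \<noteq> 0}" and v2: "Inr -` S = {..<m}" by (auto simp: S_def)
    have "w j = (\<Sum>x\<in>S. c x * FF x j)" for j
    proof -
      have "(\<Sum>x\<in>S. c x * FF x j) = (\<Sum>s\<in>{s. d s \<noteq> 0}. d s * shiftV s v j) + (\<Sum>k\<in>{..<m}. e k * basisv (int k) j)"
        using sum_split_sum[OF fS, of "\<lambda>x. c x * FF x j"] by (simp add: v1 v2 c_def)
      also have "\<dots> = cmb d j + (if j \<ge> 0 \<and> nat j \<in> {..<m} then e (nat j) else 0)"
        by (simp add: cmb_shift sum_basisv)
      also have "\<dots> = w j"
      proof (cases "j \<ge> 0 \<and> nat j \<in> {..<m}")
        case True
        then show ?thesis by (simp add: e_def)
      next
        case False
        then have "j < 0 \<or> j \<ge> int m" by auto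
        then have "w j = cmb d j" using d(2) by blast
        then show ?thesis using False by auto
      qed
      finally show ?thesis by simp
    qed
    moreover have "S \<subseteq> II" by (auto simp: S_def)
    ultimately show "w \<in> fam_span II FF" unfolding fam_span_def using fS by blast
  qed
qed

end



theorem lemma2p3:
  fixes a :: "int \<Rightarrow> complex"
  assumes "\<not> generic a"
  defines "m \<equiv> LEAST k::nat. \<exists>v\<in>perp a. v \<noteq> (\<lambda>j. 0) \<and> width v = int k"
  shows "(\<exists>v\<in>perp a. v \<noteq> (\<lambda>j. 0)) \<and>
         (\<forall>v. v \<in> perp a \<and> v \<noteq> (\<lambda>j. 0) \<and> width v = int m \<longrightarrow>
           is_basis_of (UNIV :: int set) (\<lambda>n. shiftV n v) (perp a)
         \<and> is_basis_of (range Inl \<union> Inr ` {..<m} :: (int + nat) set)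
             (\<lambda>x. case x of Inl n \<Rightarrow> shiftV n v | Inr k \<Rightarrow> basisv (int k)) Vsp)"
proof
  have "\<exists>S c. finite S \<and> (\<lambda>j. \<Sum>s\<in>S. c s * shiftA s a j) = (\<lambda>j. 0) \<and> (\<exists>s\<in>S. c s \<noteq> 0)"
    using assms(1) unfolding generic_def fam_indep_def by blast
  then obtain S c s0 where Sc: "finite S" "(\<lambda>j. \<Sum>s\<in>S. c s * shiftA s a j) = (\<lambda>j. 0)" "s0 \<in> S" "c s0 \<noteq> 0"
    by blast
  define v0 where "v0 = (\<lambda>k. if k \<in> S then c k else 0)"
  have sub: "{k. v0 k \<noteq> 0} \<subseteq> S" by (auto simp: v0_def split: if_splits)
  have "v0 \<in> Vsp" using finite_subset[OF sub Sc(1)] by (simp add: Vsp_def)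
  moreover have "pair a (shiftV i v0) = 0" for i
  proof -
    have "pair a (shiftV i v0) = (\<Sum>k\<in>S. a (k+i) * v0 k)" by (rule pair_shift[OF Sc(1) sub])
    also have "\<dots> = (\<Sum>k\<in>S. c k * shiftA k a i)"
      by (rule sum.cong) (auto simp: v0_def shiftA_def algebra_simps)
    also have "\<dots> = 0" using fun_cong[OF Sc(2), of i] by simp
    finally show ?thesis .
  qed
  moreover have "v0 \<noteq> (\<lambda>j. 0)" using Sc(3,4) by (auto simp: v0_def fun_eq_iff)
  ultimately show ex: "\<exists>v\<in>perp a. v \<noteq> (\<lambda>j. 0)" by (auto simp: perp_def)
  have mini: "\<forall>w\<in>perp a. w \<noteq> (\<lambda>j. 0) \<longrightarrow> int m \<le> width w"
  proof (intro ballI impI)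
    fix w assume w: "w \<in> perp a" "w \<noteq> (\<lambda>j. 0)"
    then have "0 \<le> width w" using width_nonneg by (auto simp: perp_def)
    moreover have "width w = int (nat (width w))" using calculation by simp
    then have "m \<le> nat (width w)" unfolding m_def using w by (intro Least_le) blast
    ultimately show "int m \<le> width w" by (simp add: le_nat_iff)
  qed
  show "\<forall>v. v \<in> perp a \<and> v \<noteq> (\<lambda>j. 0) \<and> width v = int m \<longrightarrow>
           is_basis_of (UNIV :: int set) (\<lambda>n. shiftV n v) (perp a)
         \<and> is_basis_of (range Inl \<union> Inr ` {..<m} :: (int + nat) set)
             (\<lambda>x. case x of Inl n \<Rightarrow> shiftV n v | Inr k \<Rightarrow> basisv (int k)) Vsp"
  proof (intro allI impI)
    fix v assume v: "v \<in> perp a \<and> v \<noteq> (\<lambda>j. 0) \<and> width v = int m"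
    interpret wva v m a
      using v mini by unfold_locales (auto simp: perp_def)
    have "\<forall>x\<in>II. FF x \<in> Vsp"
      using perp_shift[of v "\<lambda>_. 0"] vV basisv_Vsp Vsp_perp0 by (auto split: sum.split)
    then show "is_basis_of (UNIV :: int set) (\<lambda>n. shiftV n v) (perp a)
         \<and> is_basis_of (range Inl \<union> Inr ` {..<m} :: (int + nat) set)
             (\<lambda>x. case x of Inl n \<Rightarrow> shiftV n v | Inr k \<Rightarrow> basisv (int k)) Vsp"
      unfolding is_basis_of_def using span_perp indep_trans ext_indep ext_span perp_shift[OF vp]
      by auto
  qed
qed

end
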